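(* Let $\mathbb{F}_q$ be a finite field and $n\ge3$. For $n$ odd and $\alpha\in\mathbb{F}_q^*$ let $N_{\mathbb{D}_n}(\alpha)$ be the number of $\mathbb{F}_q$-points of $X_{\mathbb{D}_n}(\alpha,1,\dots,1)$; for $n$ even and $\alpha,\beta\in\mathbb{F}_q^*$ let $N_{\mathbb{D}_n}(\alpha,\beta)$ be the number of $\mathbb{F}_q$-points of $X_{\mathbb{D}_n}(\alpha,\beta,1,\dots,1)$. Then: (1) if $n$ is odd and $\alpha\neq1$, $N_{\mathbb{D}_n}(\alpha)=q^n-1$; (2) if $n$ is odd, $N_{\mathbb{D}_n}(1)=q^n-1+q^2\frac{q^{n-1}-1}{q^2-1}$; (3) if $n$ is even, $\alpha\neq\beta$, $\alpha\neq(-1)^{n/2}$ and $\beta\neq(-1)^{n/2}$, then $N_{\mathbb{D}_n}(\alpha,\beta)=(q^{n/2}-1)^2$; (4) if $n$ is even and $\alpha=\beta\neq(-1)^{n/2}$, then $N_{\mathbb{D}_n}(\alpha,\alpha)=(q^{n/2}-1)^2+q^2\frac{(q^{(n-2)/2}-1)(q^{n/2}-1)}{q^2-1}$; (5) if $n$ is even, $\alpha\neq\beta$ and $\alpha=(-1)^{n/2}$, then $N_{\mathbb{D}_n}((-1)^{n/2},\beta)=(q^{n/2}-1)^2+(q-1)q^{n/2}$; (6) if $n$ is even, $N_{\mathbb{D}_n}((-1)^{n/2},(-1)^{n/2})=(q^{n/2}-1)^2+2(q-1)q^{n/2}+q^2\frac{(q^{(n-2)/2}-1)(q^{n/2}-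1)}{q^2-1}+q^{(n+2)/2}$.
   Context: $X_{\mathbb{D}_n}(\alpha_1,\dots,\alpha_n)$ is the affine variety over $\mathbb{F}_q$ in variables $x_1,\dots,x_n,x'_1,\dots,x'_n$ defined by $x_1x'_1=1+\alpha_1x_3$, $x_2x'_2=1+\alpha_2x_3$, $x_3x'_3=1+\alpha_3x_1x_2x_4$, $x_ix'_i=1+\alpha_ix_{i-1}x_{i+1}$ for $4\le i\le n-1$, $x_nx'_n=1+\alpha_nx_{n-1}$ (for $n=3$: $x_3x'_3=1+\alpha_3x_1x_2$). Thus in $X_{\mathbb{D}_n}(\alpha,\beta,1,\dots,1)$ the parameters $\alpha,\beta$ sit on the two short leaves $1,2$ attached to vertex $3$. *)

theory Defs
  imports Complex_Main "HOL-Library.FuncSet"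
begin

text \<open>Right-hand side of the i-th defining equation x_i x'_i = rhs of X_{D_n}(a_1,...,a_n);
  indices are 1..n, a :: nat => 'a gives the parameters alpha_i.\<close>
definition D_rhs :: "nat \<Rightarrow> (nat \<Rightarrow> 'a::comm_ring_1) \<Rightarrow> (nat \<Rightarrow> 'a) \<Rightarrow> nat \<Rightarrow> 'a" where
  "D_rhs n a x i =
     (if i = 1 then 1 + a 1 * x 3
      else if i = 2 then 1 + a 2 * x 3
      else if i = 3 then (if n = 3 then 1 + a 3 * x 1 * x 2 else 1 + a 3 * x 1 * x 2 * x 4)
      else if i = n then 1 + a n * x (n - 1)
      else 1 + a i * x (i - 1) * x (i + 1))"

definition D_points :: "nat \<Rightarrow> (nat \<Rightarrow> 'a::{finite,comm_ring_1}) \<Rightarrow> ((nat \<Rightarrow> 'a) \<times> (nat \<Rightarrow> 'a)) set" where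
  "D_points n a = {(x, x'). x \<in> {1..n} \<rightarrow>\<^sub>E (UNIV :: 'a set) \<and> x' \<in> {1..n} \<rightarrow>\<^sub>E (UNIV :: 'a set) \<and>
       (\<forall>i\<in>{1..n}. x i * x' i = D_rhs n a x i)}"

definition N_D_odd :: "nat \<Rightarrow> 'a::{finite,comm_ring_1} \<Rightarrow> nat" where
  "N_D_odd n \<alpha> = card (D_points n (\<lambda>i. if i = 1 then \<alpha> else 1))"

definition N_D_even :: "nat \<Rightarrow> 'a::{finite,comm_ring_1} \<Rightarrow> 'a \<Rightarrow> nat" where
  "N_D_even n \<alpha> \<beta> = card (D_points n (\<lambda>i. if i = 1 then \<alpha> else if i = 2 then \<beta> else 1))"

end

theory Submission
  imports Defs "HOL-Library.Cardinality"
begin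


definition wt :: "'a::{finite,field} \<Rightarrow> 'a \<Rightarrow> real" where
  "wt u r = (if u = 0 then (if r = 0 then real (card (UNIV::'a set)) else 0) else 1)"

lemma card_fiber: "real (card {v::'a::{finite,field}. u * v = r}) = wt u r"
proof (cases "u = 0")
  case True
  then show ?thesis by (auto simp: wt_def)
next
  case False
  then have "{v. u * v = r} = {r / u}" by (auto simp: field_simps)
  then show ?thesis using False by (simp add: wt_def)
qed

definition Wt :: "nat \<Rightarrow> (nat \<Rightarrow> 'a::{finite,field}) \<Rightarrow> real" where
  "Wt n a = (\<Sum>x\<in>{1..n} \<rightarrow>\<^sub>E (UNIV::'a set). \<Prod>i\<in>{1..n}. wt (x i) (D_rhs n a x i))"

definition Pc :: "nat \<Rightarrow> (nat \<Rightarrow> 'a::{finite,field}) \<Rightarrow> 'a \<Rightarrow> real" where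
  "Pc n a c = (\<Sum>x\<in>{x\<in>{1..n} \<rightarrow>\<^sub>E (UNIV::'a set). x n = c}. \<Prod>i\<in>{1..n}. wt (x i) (D_rhs n a x i))"

lemma card_D: "real (card (D_points n (a::nat \<Rightarrow> 'a::{finite,field}))) = Wt n a"
proof -
  have eq: "D_points n a = Sigma ({1..n} \<rightarrow>\<^sub>E (UNIV::'a set))
      (\<lambda>x. \<Pi>\<^sub>E i\<in>{1..n}. {v. x i * v = D_rhs n a x i})"
    unfolding D_points_def by (auto simp: PiE_iff extensional_def)
  have "card (D_points n a) = (\<Sum>x\<in>{1..n} \<rightarrow>\<^sub>E (UNIV::'a set). \<Prod>i\<in>{1..n}. card {v. x i * v = D_rhs n a x i})"
    unfolding eq by (simp add: card_PiE finite_PiE)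
  then show ?thesis unfolding Wt_def by (simp add: card_fiber)
qed

lemma Wt_Pc: "Wt n a = (\<Sum>c\<in>UNIV. Pc n a c)"
  unfolding Wt_def Pc_def
  by (rule sum.group[symmetric]) (auto simp: finite_PiE)

lemma D_rhs_cong: assumes h: "\<And>i. i \<in> {1..n} \<Longrightarrow> a i = b i" and i: "i \<in> {1..n}"
  shows "D_rhs n a x i = D_rhs n b x i"
  using i h[OF i] h[of 1] h[of 2] h[of 3] h[of n] unfolding D_rhs_def by auto

lemma Pc_cong: assumes h: "\<And>i. i \<in> {1..n} \<Longrightarrow> a i = b i" shows "Pc n a c = Pc n b c"
  unfolding Pc_def by (intro sum.cong prod.cong refl, subst D_rhs_cong[OF h]) auto

lemma Wt_cong: assumes h: "\<And>i. i \<in> {1..n} \<Longrightarrow> a i = b i" shows "Wt n a = Wt n b"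
  unfolding Wt_def by (intro sum.cong prod.cong refl, subst D_rhs_cong[OF h]) auto

lemma D_rhs_step:
  assumes "n \<ge> 4" "i \<in> {1..n-1}"
  shows "D_rhs n a (y(n := c)) i = D_rhs (n-1) (a(n-1 := a (n-1) * c)) y i"
proof -
  consider "i = n - 1" "n = 4" | "i = n - 1" "n > 4" | "i < n - 1" using assms by force
  then show ?thesis
  proof cases
    case 1 then show ?thesis by (simp add: D_rhs_def algebra_simps)
  next
    case 2
    then have f: "n - 1 \<noteq> n" "n - 1 \<noteq> 3" "n - 1 \<noteq> 2" "n - 1 \<noteq> 1" "n - 1 - 1 \<noteq> n" "n - 1 + 1 = n"
      "n - 1 - 1 \<noteq> n - 1" "n \<noteq> 3" "n - 1 \<noteq> 0" by auto
    show ?thesis unfolding D_rhs_def using 2 f by (auto simp: algebra_simps)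
  next
    case 3 then show ?thesis using assms by (auto simp: D_rhs_def)
  qed
qed

lemma Pc_step:
  fixes a :: "nat \<Rightarrow> 'a::{finite,field}"
  assumes n: "n \<ge> 4"
  shows "Pc n a c = (\<Sum>d\<in>UNIV. wt c (1 + a n * d) * Pc (n-1) (a(n-1 := a (n-1) * c)) d)"
proof -
  define a' where "a' = a(n-1 := a (n-1) * c)"
  define T where "T = {1..n-1} \<rightarrow>\<^sub>E (UNIV::'a set)"
  define Q where "Q y = (\<Prod>i\<in>{1..n-1}. wt (y i) (D_rhs (n-1) a' y i))" for y
  have ins: "{1..n} = insert n {1..n-1}" using n by auto
  have rn: "D_rhs n a (y(n := c)) n = 1 + a n * y (n-1)" for y
    using n by (auto simp: D_rhs_def)
  have "(\<Sum>y\<in>T. wt c (1 + a n * y (n-1)) * Q y) = Pc n a c"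
    unfolding Pc_def
  proof (rule sum.reindex_bij_witness[where j="\<lambda>y. y(n := c)" and i="\<lambda>x. x(n := undefined)"])
    fix x assume x: "x \<in> {x \<in> {1..n} \<rightarrow>\<^sub>E (UNIV::'a set). x n = c}"
    then show "(x(n := undefined))(n := c) = x" by auto
    show "x(n := undefined) \<in> T" using x unfolding T_def by (auto simp: PiE_iff extensional_def)
  next
    fix y assume y: "y \<in> T"
    then have "y n = undefined" using n unfolding T_def by (auto simp: PiE_iff extensional_def)
    then show "(y(n := c))(n := undefined) = y" by auto
    show "y(n := c) \<in> {x \<in> {1..n} \<rightarrow>\<^sub>E (UNIV::'a set). x n = c}"
      using y n unfolding T_def by (auto simp: PiE_iff extensional_def)
    have "(\<Prod>i\<in>{1..n}. wt ((y(n := c)) i) (D_rhs n a (y(n := c)) i))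
        = wt c (D_rhs n a (y(n := c)) n) * (\<Prod>i\<in>{1..n-1}. wt ((y(n := c)) i) (D_rhs n a (y(n := c)) i))"
      unfolding ins by (subst prod.insert) auto
    also have "(\<Prod>i\<in>{1..n-1}. wt ((y(n := c)) i) (D_rhs n a (y(n := c)) i)) = Q y"
      unfolding Q_def a'_def using n by (intro prod.cong refl) (auto simp: D_rhs_step)
    also have "wt c (D_rhs n a (y(n := c)) n) = wt c (1 + a n * y (n-1))" by (simp only: rn)
    finally show "(\<Prod>i\<in>{1..n}. wt ((y(n := c)) i) (D_rhs n a (y(n := c)) i))
        = wt c (1 + a n * y (n-1)) * Q y" .
  qed
  then have "Pc n a c = (\<Sum>y\<in>T. wt c (1 + a n * y (n-1)) * Q y)" by simp
  also have "\<dots> = (\<Sum>d\<in>UNIV. \<Sum>y\<in>{y\<in>T. y (n-1) = d}. wt c (1 + a n * y (n-1)) * Q y)"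
    by (rule sum.group[symmetric]) (auto simp: T_def finite_PiE)
  also have "\<dots> = (\<Sum>d\<in>UNIV. wt c (1 + a n * d) * Pc (n-1) a' d)"
    unfolding Pc_def Q_def T_def by (intro sum.cong refl) (auto simp: sum_distrib_left)
  finally show ?thesis unfolding a'_def .
qed

lemma card_ge2: "CARD('a::{finite,field}) \<ge> 2"
proof -
  have "card {0::'a, 1} \<le> CARD('a)" by (rule card_mono) auto
  then show ?thesis by simp
qed

lemma card_nz: "real (card (UNIV - {0::'a::{finite,field}})) = real CARD('a) - 1"
  using card_ge2[where 'a='a] by (simp add: card_Diff_singleton of_nat_diff)

lemma wt_nz: "u \<noteq> 0 \<Longrightarrow> wt u r = 1" by (simp add: wt_def)
lemma wt_0: "wt (0::'a::{finite,field}) r = (if r = 0 then real CARD('a) else 0)" by (simp add: wt_def)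

definition sig :: "'a::{finite,field} \<Rightarrow> real" where
  "sig r = real CARD('a) - 1 + (if r = 0 then real CARD('a) else 0)"

lemma sum_wt: "(\<Sum>u\<in>UNIV. wt u (r::'a::{finite,field})) = sig r"
proof -
  have "(\<Sum>u\<in>UNIV. wt u r) = wt 0 r + (\<Sum>u\<in>UNIV - {0}. wt u r)"
    by (rule sum.remove) auto
  also have "(\<Sum>u\<in>UNIV - {0}. wt u r) = (\<Sum>u\<in>UNIV - {0::'a}. 1)"
    by (rule sum.cong) (auto simp: wt_nz)
  also have "\<dots> = real CARD('a) - 1" using card_nz[where 'a='a] by simp
  finally show ?thesis by (simp add: wt_0 sig_def)
qed

lemma P3_base:
  fixes a :: "nat \<Rightarrow> 'a::{finite,field}"
  shows "Pc 3 a c = (\<Sum>u\<in>UNIV. \<Sum>v\<in>UNIV. wt u (1 + a 1 * c) * wt v (1 + a 2 * c) * wt c (1 + a 3 * u * v))"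
proof -
  define j :: "'a \<times> 'a \<Rightarrow> nat \<Rightarrow> 'a" where
    "j p = (\<lambda>i. if i = 1 then fst p else if i = 2 then snd p else if i = 3 then c else undefined)" for p
  have "(\<Sum>p\<in>UNIV \<times> UNIV. wt (fst p) (1 + a 1 * c) * wt (snd p) (1 + a 2 * c) * wt c (1 + a 3 * fst p * snd p)) = Pc 3 a c"
    unfolding Pc_def
  proof (rule sum.reindex_bij_witness[where j=j and i="\<lambda>x. (x 1, x 2)"])
    fix x :: "nat \<Rightarrow> 'a" assume x: "x \<in> {x \<in> {1..3} \<rightarrow>\<^sub>E (UNIV::'a set). x 3 = c}"
    show "j (x 1, x 2) = x"
    proof
      fix i show "j (x 1, x 2) i = x i" using x by (auto simp: j_def PiE_iff extensional_def)
    qed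
  next
    fix p :: "'a \<times> 'a"
    show "(j p 1, j p 2) = p" by (simp add: j_def)
    show "j p \<in> {x \<in> {1..3} \<rightarrow>\<^sub>E (UNIV::'a set). x 3 = c}" by (auto simp: j_def PiE_iff extensional_def)
    have e: "{1..3::nat} = {1,2,3}" by auto
    show "(\<Prod>i\<in>{1..3}. wt (j p i) (D_rhs 3 a (j p) i)) =
      wt (fst p) (1 + a 1 * c) * wt (snd p) (1 + a 2 * c) * wt c (1 + a 3 * fst p * snd p)"
      unfolding e by (simp add: j_def D_rhs_def)
  qed simp_all
  then show ?thesis by (simp add: sum.cartesian_product case_prod_beta)
qed



lemma Pc_nz:
  fixes a :: "nat \<Rightarrow> 'a::{finite,field}"
  assumes "n \<ge> 4" "c \<noteq> 0"
  shows "Pc n a c = Wt (n-1) (a(n-1 := a (n-1) * c))"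
  using assms by (simp add: Pc_step wt_nz Wt_Pc)

lemma sum_delta_q:
  fixes f :: "'a::finite \<Rightarrow> real"
  shows "(\<Sum>d\<in>UNIV. (if d = d0 then k else 0) * f d) = k * f d0"
  by (simp add: if_distrib[where f="\<lambda>z. z * _"] cong: if_cong)

lemma lin_iff:
  fixes t d :: "'a::field"
  assumes "t \<noteq> 0"
  shows "(1 + t * d = 0) = (d = - 1 / t)"
  using neg_eq_iff_add_eq_0[of 1 "t*d"] assms by (auto simp: field_simps)

lemma Pc_zero:
  fixes a :: "nat \<Rightarrow> 'a::{finite,field}"
  assumes "n \<ge> 4" "a n \<noteq> 0"
  shows "Pc n a 0 = real CARD('a) * Pc (n-1) (a(n-1 := 0)) (- 1 / a n)"
proof -
  have w: "wt 0 (1 + a n * d) = (if d = - 1 / a n then real CARD('a) else 0)" for d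
    using lin_iff[OF assms(2), of d] by (simp add: wt_0)
  show ?thesis using assms(1) by (simp add: Pc_step w sum_delta_q)
qed

lemma P3_nz:
  fixes a :: "nat \<Rightarrow> 'a::{finite,field}"
  assumes "c \<noteq> 0"
  shows "Pc 3 a c = sig (1 + a 1 * c) * sig (1 + a 2 * c)"
  using assms by (simp add: P3_base wt_nz sum_wt[symmetric] sum_product)

lemma P3_zero:
  fixes a :: "nat \<Rightarrow> 'a::{finite,field}"
  assumes "a 3 \<noteq> 0"
  shows "Pc 3 a 0 = real CARD('a) * (real CARD('a) - 1)"
proof -
  let ?q = "real CARD('a)"
  have inner: "(\<Sum>v\<in>UNIV. wt u 1 * wt v 1 * wt 0 (1 + a 3 * u * v)) = (if u = 0 then 0 else ?q)" for u
  proof (cases "u = 0")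
    case True then show ?thesis by (simp add: wt_0)
  next
    case False
    have t: "a 3 * u \<noteq> 0" using False assms by simp
    have "wt u 1 * wt v 1 * wt 0 (1 + a 3 * u * v) = (if v = - 1 / (a 3 * u) then ?q else 0)" for v
    proof (cases "v = - 1 / (a 3 * u)")
      case True
      then have "v \<noteq> 0" using t by simp
      then show ?thesis using True lin_iff[OF t, of v] False by (simp add: wt_0 wt_nz)
    next
      case F2: False
      then show ?thesis using lin_iff[OF t, of v] False by (simp add: wt_0 wt_nz wt_def)
    qed
    then show ?thesis using False by simp
  qed
  have "Pc 3 a 0 = (\<Sum>u\<in>UNIV. (if u = (0::'a) then 0 else ?q))"
    by (simp add: P3_base inner)
  also have "\<dots> = (\<Sum>u\<in>UNIV - {0::'a}. ?q)"
    by (subst sum.remove[of UNIV 0]) (auto intro!: sum.cong)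
  also have "\<dots> = ?q * (?q - 1)" using card_nz[where 'a='a] by simp
  finally show ?thesis .
qed

lemma KEY:
  fixes u v :: "'a::{finite,field}"
  assumes "u \<noteq> 0" "v \<noteq> 0"
  shows "(\<Sum>c\<in>UNIV - {0}. (real CARD('a) - 1 + (if c = u then real CARD('a) else 0)) *
            (real CARD('a) - 1 + (if c = v then real CARD('a) else 0)))
       = (real CARD('a) - 1) ^ 3 + 2 * real CARD('a) * (real CARD('a) - 1)
          + (if u = v then real CARD('a) ^ 2 else 0)"
proof -
  let ?q = "real CARD('a)"
  have e: "(?q - 1 + (if c = u then ?q else 0)) * (?q - 1 + (if c = v then ?q else 0))
     = (?q - 1)^2 + (if c = u then ?q * (?q - 1) else 0) + (if c = v then ?q * (?q - 1) else 0)
       + (if c = u then (if u = v then ?q^2 else 0) else 0)" for c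
    by (auto simp: power2_eq_square algebra_simps)
  have "(\<Sum>c\<in>UNIV - {0}. (?q - 1 + (if c = u then ?q else 0)) * (?q - 1 + (if c = v then ?q else 0)))
    = (\<Sum>c\<in>UNIV - {0::'a}. (?q - 1)^2) + (\<Sum>c\<in>UNIV - {0}. (if c = u then ?q * (?q - 1) else 0))
      + (\<Sum>c\<in>UNIV - {0}. (if c = v then ?q * (?q - 1) else 0))
      + (\<Sum>c\<in>UNIV - {0}. (if c = u then (if u = v then ?q^2 else 0) else 0))"
    unfolding e by (simp only: sum.distrib)
  also have "\<dots> = (?q - 1) * (?q - 1)^2 + ?q * (?q - 1) + ?q * (?q - 1) + (if u = v then ?q^2 else 0)"
    using assms card_nz[where 'a='a] by simp
  finally show ?thesis by (simp add: power2_eq_square power3_eq_cube algebra_simps)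
qed



definition AA :: "'a \<Rightarrow> 'a \<Rightarrow> nat \<Rightarrow> 'a \<Rightarrow> nat \<Rightarrow> 'a::{finite,field}" where
  "AA \<alpha> \<beta> m t = (\<lambda>i. if i = 1 then \<alpha> else if i = 2 then \<beta> else if i = m then t else 1)"

definition G :: "'a \<Rightarrow> 'a \<Rightarrow> nat \<Rightarrow> 'a::{finite,field} \<Rightarrow> real" where
  "G \<alpha> \<beta> m t = Wt m (AA \<alpha> \<beta> m t)"

definition S :: "'a::{finite,field} \<Rightarrow> 'a \<Rightarrow> nat \<Rightarrow> real" where
  "S \<alpha> \<beta> m = (\<Sum>t\<in>UNIV - {0::'a}. G \<alpha> \<beta> m t)"

lemma G_rec:
  fixes \<alpha> :: "'a::{finite,field}"
  assumes m: "m \<ge> 4"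
  shows "G \<alpha> \<beta> m t = S \<alpha> \<beta> (m-1) + Pc m (AA \<alpha> \<beta> m t) 0"
proof -
  have "G \<alpha> \<beta> m t = Pc m (AA \<alpha> \<beta> m t) 0 + (\<Sum>c\<in>UNIV - {0}. Pc m (AA \<alpha> \<beta> m t) c)"
    unfolding G_def Wt_Pc by (rule sum.remove) auto
  also have "(\<Sum>c\<in>UNIV - {0}. Pc m (AA \<alpha> \<beta> m t) c) = S \<alpha> \<beta> (m-1)"
    unfolding S_def G_def
  proof (rule sum.cong[OF refl])
    fix c :: 'a assume "c \<in> UNIV - {0}"
    then have "Pc m (AA \<alpha> \<beta> m t) c = Wt (m-1) ((AA \<alpha> \<beta> m t)(m-1 := AA \<alpha> \<beta> m t (m-1) * c))"
      using m by (simp add: Pc_nz)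
    also have "\<dots> = Wt (m-1) (AA \<alpha> \<beta> (m-1) c)"
      by (rule Wt_cong) (use m in \<open>auto simp: AA_def\<close>)
    finally show "Pc m (AA \<alpha> \<beta> m t) c = Wt (m-1) (AA \<alpha> \<beta> (m-1) c)" .
  qed
  finally show ?thesis by simp
qed

lemma P0_big:
  fixes \<alpha> :: "'a::{finite,field}"
  assumes m: "m \<ge> 5" and t: "t \<noteq> 0"
  shows "Pc m (AA \<alpha> \<beta> m t) 0 = real CARD('a) * G \<alpha> \<beta> (m-2) (- 1 / t)"
proof -
  have am: "AA \<alpha> \<beta> m t m = t" using m by (simp add: AA_def)
  have "Pc m (AA \<alpha> \<beta> m t) 0 = real CARD('a) * Pc (m-1) ((AA \<alpha> \<beta> m t)(m-1 := 0)) (- 1 / t)"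
    using Pc_zero[of m "AA \<alpha> \<beta> m t"] m t am by simp
  also have "Pc (m-1) ((AA \<alpha> \<beta> m t)(m-1 := 0)) (- 1 / t)
     = Wt (m-1-1) (((AA \<alpha> \<beta> m t)(m-1 := 0))(m-1-1 := ((AA \<alpha> \<beta> m t)(m-1 := 0)) (m-1-1) * (- 1 / t)))"
    using m t by (intro Pc_nz) auto
  also have "\<dots> = G \<alpha> \<beta> (m-2) (- 1 / t)"
    unfolding G_def diff_diff_left one_add_one by (rule Wt_cong) (use m in \<open>auto simp: AA_def\<close>)
  finally show ?thesis .
qed

lemma P0_4:
  fixes \<alpha> :: "'a::{finite,field}"
  assumes t: "t \<noteq> 0"
  shows "Pc 4 (AA \<alpha> \<beta> 4 t) 0 = real CARD('a) * (sig (1 + \<alpha> * (- 1 / t)) * sig (1 + \<beta> * (- 1 / t)))"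
proof -
  have "Pc 4 (AA \<alpha> \<beta> 4 t) 0 = real CARD('a) * Pc 3 ((AA \<alpha> \<beta> 4 t)(3 := 0)) (- 1 / t)"
    using Pc_zero[of 4 "AA \<alpha> \<beta> 4 t"] t by (simp add: AA_def)
  also have "Pc 3 ((AA \<alpha> \<beta> 4 t)(3 := 0)) (- 1 / t) = sig (1 + \<alpha> * (- 1 / t)) * sig (1 + \<beta> * (- 1 / t))"
    using t by (subst P3_nz) (auto simp: AA_def)
  finally show ?thesis .
qed

lemma sig_lin:
  fixes \<alpha> :: "'a::{finite,field}"
  assumes "\<alpha> \<noteq> 0"
  shows "sig (1 + \<alpha> * c) = real CARD('a) - 1 + (if c = - 1 / \<alpha> then real CARD('a) else 0)"
  using lin_iff[OF assms, of c] by (simp add: sig_def)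

lemma sig_inv:
  fixes \<alpha> :: "'a::{finite,field}"
  assumes "t \<noteq> 0"
  shows "sig (1 + \<alpha> * (- 1 / t)) = real CARD('a) - 1 + (if t = \<alpha> then real CARD('a) else 0)"
proof -
  have "(1 + \<alpha> * (- 1 / t) = 0) = (t = \<alpha>)"
    using assms by (auto simp: field_simps)
  then show ?thesis by (simp add: sig_def)
qed

definition Kv :: "'a::{finite,field} itself \<Rightarrow> bool \<Rightarrow> real" where
  "Kv _ e = (real CARD('a) - 1) ^ 3 + 2 * real CARD('a) * (real CARD('a) - 1)
          + (if e then real CARD('a) ^ 2 else 0)"

lemma G3:
  fixes \<alpha> :: "'a::{finite,field}"
  assumes a: "\<alpha> \<noteq> 0" and b: "\<beta> \<noteq> 0" and t: "t \<noteq> 0"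
  shows "G \<alpha> \<beta> 3 t = real CARD('a) * (real CARD('a) - 1) + Kv TYPE('a) (\<alpha> = \<beta>)"
proof -
  have "G \<alpha> \<beta> 3 t = Pc 3 (AA \<alpha> \<beta> 3 t) 0 + (\<Sum>c\<in>UNIV - {0}. Pc 3 (AA \<alpha> \<beta> 3 t) c)"
    unfolding G_def Wt_Pc by (rule sum.remove) auto
  also have "Pc 3 (AA \<alpha> \<beta> 3 t) 0 = real CARD('a) * (real CARD('a) - 1)"
    using t by (intro P3_zero) (simp add: AA_def)
  also have "(\<Sum>c\<in>UNIV - {0}. Pc 3 (AA \<alpha> \<beta> 3 t) c) =
      (\<Sum>c\<in>UNIV - {0}. (real CARD('a) - 1 + (if c = - 1 / \<alpha> then real CARD('a) else 0)) *
            (real CARD('a) - 1 + (if c = - 1 / \<beta> then real CARD('a) else 0)))"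
    by (rule sum.cong[OF refl]) (simp add: P3_nz AA_def sig_lin a b)
  also have "\<dots> = Kv TYPE('a) (\<alpha> = \<beta>)"
    using a b by (subst KEY) (auto simp: Kv_def)
  finally show ?thesis .
qed

lemma S3:
  fixes \<alpha> :: "'a::{finite,field}"
  assumes a: "\<alpha> \<noteq> 0" and b: "\<beta> \<noteq> 0"
  shows "S \<alpha> \<beta> 3 = (real CARD('a) - 1) * (real CARD('a) * (real CARD('a) - 1) + Kv TYPE('a) (\<alpha> = \<beta>))"
proof -
  have "S \<alpha> \<beta> 3 = (\<Sum>t\<in>UNIV - {0::'a}. real CARD('a) * (real CARD('a) - 1) + Kv TYPE('a) (\<alpha> = \<beta>))"
    unfolding S_def by (rule sum.cong[OF refl]) (simp add: G3 a b)
  then show ?thesis using card_nz[where 'a='a] by simp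
qed

lemma S4:
  fixes \<alpha> :: "'a::{finite,field}"
  assumes a: "\<alpha> \<noteq> 0" and b: "\<beta> \<noteq> 0"
  shows "S \<alpha> \<beta> 4 = (real CARD('a) - 1) * S \<alpha> \<beta> 3 + real CARD('a) * Kv TYPE('a) (\<alpha> = \<beta>)"
proof -
  have "S \<alpha> \<beta> 4 = (\<Sum>t\<in>UNIV - {0::'a}. S \<alpha> \<beta> 3 + real CARD('a) *
       ((real CARD('a) - 1 + (if t = \<alpha> then real CARD('a) else 0)) *
            (real CARD('a) - 1 + (if t = \<beta> then real CARD('a) else 0))))"
    unfolding S_def[of \<alpha> \<beta> 4]
  proof (rule sum.cong[OF refl])
    fix t :: 'a assume "t \<in> UNIV - {0}"
    then have t: "t \<noteq> 0" by simp
    show "G \<alpha> \<beta> 4 t = S \<alpha> \<beta> 3 + real CARD('a) *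
       ((real CARD('a) - 1 + (if t = \<alpha> then real CARD('a) else 0)) *
            (real CARD('a) - 1 + (if t = \<beta> then real CARD('a) else 0)))"
      using G_rec[of 4 \<alpha> \<beta> t] P0_4[OF t, of \<alpha> \<beta>] sig_inv[OF t, of \<alpha>] sig_inv[OF t, of \<beta>] by simp
  qed
  also have "\<dots> = (real CARD('a) - 1) * S \<alpha> \<beta> 3 + real CARD('a) *
      (\<Sum>t\<in>UNIV - {0::'a}. (real CARD('a) - 1 + (if t = \<alpha> then real CARD('a) else 0)) *
            (real CARD('a) - 1 + (if t = \<beta> then real CARD('a) else 0)))"
    using card_nz[where 'a='a] by (simp add: sum.distrib sum_distrib_left)
  also have "\<dots> = (real CARD('a) - 1) * S \<alpha> \<beta> 3 + real CARD('a) * Kv TYPE('a) (\<alpha> = \<beta>)"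
    using a b by (subst KEY) (auto simp: Kv_def)
  finally show ?thesis .
qed

lemma G_big:
  fixes \<alpha> :: "'a::{finite,field}"
  assumes m: "m \<ge> 5" and t: "t \<noteq> 0"
  shows "G \<alpha> \<beta> m t = S \<alpha> \<beta> (m-1) + real CARD('a) * G \<alpha> \<beta> (m-2) (- 1 / t)"
  using m t by (simp add: G_rec P0_big)

lemma S_rec:
  fixes \<alpha> :: "'a::{finite,field}"
  assumes m: "m \<ge> 5"
  shows "S \<alpha> \<beta> m = (real CARD('a) - 1) * S \<alpha> \<beta> (m-1) + real CARD('a) * S \<alpha> \<beta> (m-2)"
proof -
  have "S \<alpha> \<beta> m = (\<Sum>t\<in>UNIV - {0::'a}. S \<alpha> \<beta> (m-1) + real CARD('a) * G \<alpha> \<beta> (m-2) (- 1 / t))"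
    unfolding S_def[of \<alpha> \<beta> m] by (rule sum.cong[OF refl]) (use m in \<open>simp add: G_big\<close>)
  also have "\<dots> = (real CARD('a) - 1) * S \<alpha> \<beta> (m-1) + real CARD('a) * (\<Sum>t\<in>UNIV - {0::'a}. G \<alpha> \<beta> (m-2) (- 1 / t))"
    using card_nz[where 'a='a] by (simp add: sum.distrib sum_distrib_left)
  also have "(\<Sum>t\<in>UNIV - {0::'a}. G \<alpha> \<beta> (m-2) (- 1 / t)) = S \<alpha> \<beta> (m-2)"
    unfolding S_def
    by (rule sum.reindex_bij_witness[where i="\<lambda>t. - 1 / t" and j="\<lambda>t. - 1 / t"]) auto
  finally show ?thesis .
qed



lemma alg_S:
  fixes q Q e X Y :: real
  assumes "(q+1)*X = (q+1)*(q-1)*(q*Q - 1) + e*q^2*(Q-1)"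
      and "(q+1)*Y = (q+1)*(q-1)*(q*q*Q+1) + e*q^2*(q*Q+1)"
  shows "(q+1)*((q-1)*Y + q*X) = (q+1)*(q-1)*(q*q*q*Q - 1) + e*q^2*(q*q*Q - 1)"
  using assms by algebra

lemma alg_S2:
  fixes q Q e X Y :: real
  assumes "(q+1)*X = (q+1)*(q-1)*(q*q*q*Q - 1) + e*q^2*(q*q*Q-1)"
      and "(q+1)*Y = (q+1)*(q-1)*(q*q*Q+1) + e*q^2*(q*Q+1)"
  shows "(q+1)*((q-1)*X + q*Y) = (q+1)*(q-1)*(q*q*q*q*Q + 1) + e*q^2*(q*q*q*Q + 1)"
  using assms by algebra

definition ee :: "bool \<Rightarrow> real" where "ee b = (if b then 1 else 0)"

lemma Kv_ee: "Kv TYPE('a::{finite,field}) b = (real CARD('a) - 1) ^ 3 + 2 * real CARD('a) * (real CARD('a) - 1)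
          + ee b * real CARD('a) ^ 2"
  by (simp add: Kv_def ee_def)

lemma S_closed:
  fixes \<alpha> :: "'a::{finite,field}"
  assumes a: "\<alpha> \<noteq> 0" and b: "\<beta> \<noteq> 0"
  defines "q \<equiv> real CARD('a)"
  shows "(q+1) * S \<alpha> \<beta> (2*k+3) = (q+1)*(q-1)*(q*q^(2*k+2) - 1) + ee (\<alpha>=\<beta>)*q^2*(q^(2*k+2)-1) \<and>
         (q+1) * S \<alpha> \<beta> (2*k+4) = (q+1)*(q-1)*(q*q*q^(2*k+2) + 1) + ee (\<alpha>=\<beta>)*q^2*(q*q^(2*k+2)+1)"
proof (induction k)
  case 0
  have s3: "S \<alpha> \<beta> 3 = (q - 1) * (q * (q - 1) + ((q - 1) ^ 3 + 2 * q * (q - 1) + ee (\<alpha>=\<beta>) * q ^ 2))"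
    using S3[OF a b] by (simp add: Kv_ee q_def)
  have s4: "S \<alpha> \<beta> 4 = (q - 1) * S \<alpha> \<beta> 3 + q * ((q - 1) ^ 3 + 2 * q * (q - 1) + ee (\<alpha>=\<beta>) * q ^ 2)"
    using S4[OF a b] by (simp add: Kv_ee q_def)
  show ?case by (simp add: s4 s3 power2_eq_square power3_eq_cube algebra_simps)
next
  case (Suc k)
  define Q where "Q = q^(2*k+2)"
  have Q: "q^(2*Suc k+2) = q*q*Q" by (simp add: Q_def power_add power2_eq_square)
  have r5: "S \<alpha> \<beta> (2*k+5) = (q-1) * S \<alpha> \<beta> (2*k+4) + q * S \<alpha> \<beta> (2*k+3)"
  proof -
    have m: "2*k+5-1 = 2*k+4" "2*k+5-2 = 2*k+3" "2*k+5 \<ge> 5" by simp_all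
    show ?thesis using S_rec[OF m(3), of \<alpha> \<beta>] unfolding m(1,2) q_def .
  qed
  have r6: "S \<alpha> \<beta> (2*k+6) = (q-1) * S \<alpha> \<beta> (2*k+5) + q * S \<alpha> \<beta> (2*k+4)"
  proof -
    have m: "2*k+6-1 = 2*k+5" "2*k+6-2 = 2*k+4" "2*k+6 \<ge> 5" by simp_all
    show ?thesis using S_rec[OF m(3), of \<alpha> \<beta>] unfolding m(1,2) q_def .
  qed
  have IH1: "(q+1) * S \<alpha> \<beta> (2*k+3) = (q+1)*(q-1)*(q*Q - 1) + ee (\<alpha>=\<beta>)*q^2*(Q-1)"
    using Suc.IH by (simp add: Q_def)
  have IH2: "(q+1) * S \<alpha> \<beta> (2*k+4) = (q+1)*(q-1)*(q*q*Q + 1) + ee (\<alpha>=\<beta>)*q^2*(q*Q+1)"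
    using Suc.IH by (simp add: Q_def)
  have h5: "(q+1) * S \<alpha> \<beta> (2*k+5) = (q+1)*(q-1)*(q*q*q*Q - 1) + ee (\<alpha>=\<beta>)*q^2*(q*q*Q-1)"
    unfolding r5 by (rule alg_S[OF IH1 IH2])
  have h6: "(q+1) * S \<alpha> \<beta> (2*k+6) = (q+1)*(q-1)*(q*q*q*q*Q + 1) + ee (\<alpha>=\<beta>)*q^2*(q*q*q*Q+1)"
    unfolding r6 by (rule alg_S2[OF h5 IH2])
  have e1: "2 * Suc k + 3 = 2*k+5" "2 * Suc k + 4 = 2*k+6" by simp_all
  show ?case unfolding e1 Q using h5 h6 by (simp add: algebra_simps)
qed

lemma alg_Go:
  fixes q Q e X Y :: real
  assumes "(q+1)*Y = (q+1)*(q-1)*(q*q*Q+1) + e*q^2*(q*Q+1)"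
      and "(q^2-1)*X = (q^2-1)*(q*Q-1) + e*q^2*(Q-1)"
  shows "(q^2-1)*(Y + q*X) = (q^2-1)*(q*q*q*Q - 1) + e*q^2*(q*q*Q-1)"
  using assms by algebra

lemma alg_Ge:
  fixes q P e A B X Y :: real
  assumes "(q+1)*Y = (q+1)*(q-1)*(q*q*q*(P*P) - 1) + e*q^2*(q*q*(P*P) - 1)"
      and "(q^2-1)*X = (q^2-1)*((q*P-1)^2 + (q-1)*(q*P)*(A+B) + q*q*P*A*B) + e*q^2*(P-1)*(q*P-1)"
  shows "(q^2-1)*(Y + q*X) = (q^2-1)*((q*q*P-1)^2 + (q-1)*(q*q*P)*(A+B) + q*q*q*P*A*B) + e*q^2*(q*P-1)*(q*q*P-1)"
  using assms by algebra

lemma G_odd: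
  fixes \<alpha> :: "'a::{finite,field}"
  assumes a: "\<alpha> \<noteq> 0" and b: "\<beta> \<noteq> 0"
  defines "q \<equiv> real CARD('a)"
  shows "\<forall>t. t \<noteq> 0 \<longrightarrow> (q^2-1) * G \<alpha> \<beta> (2*k+3) t = (q^2-1)*(q*q^(2*k+2) - 1) + ee (\<alpha>=\<beta>)*q^2*(q^(2*k+2)-1)"
proof (induction k)
  case 0
  show ?case
  proof (intro allI impI)
    fix t :: 'a assume t: "t \<noteq> 0"
    have g: "G \<alpha> \<beta> 3 t = q * (q - 1) + ((q - 1) ^ 3 + 2 * q * (q - 1) + ee (\<alpha>=\<beta>) * q ^ 2)"
      using G3[OF a b t] by (simp add: Kv_ee q_def)
    show "(q^2-1) * G \<alpha> \<beta> (2*0+3) t = (q^2-1)*(q*q^(2*0+2) - 1) + ee (\<alpha>=\<beta>)*q^2*(q^(2*0+2)-1)"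
      by (simp add: g power2_eq_square power3_eq_cube algebra_simps)
  qed
next
  case (Suc k)
  show ?case
  proof (intro allI impI)
    fix t :: 'a assume t: "t \<noteq> 0"
    define Q where "Q = q^(2*k+2)"
    have Q: "q^(2*Suc k+2) = q*q*Q" by (simp add: Q_def power_add power2_eq_square)
    have m: "2*k+5-1 = 2*k+4" "2*k+5-2 = 2*k+3" "2*k+5 \<ge> 5" by simp_all
    have r: "G \<alpha> \<beta> (2*k+5) t = S \<alpha> \<beta> (2*k+4) + q * G \<alpha> \<beta> (2*k+3) (- 1 / t)"
      using G_big[OF m(3) t, of \<alpha> \<beta>] unfolding m(1,2) q_def .
    have h1: "(q+1)*S \<alpha> \<beta> (2*k+4) = (q+1)*(q-1)*(q*q*Q+1) + ee (\<alpha>=\<beta>)*q^2*(q*Q+1)"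
      using S_closed[OF a b, of k] by (simp add: Q_def q_def)
    have h2: "(q^2-1)*G \<alpha> \<beta> (2*k+3) (- 1 / t) = (q^2-1)*(q*Q-1) + ee (\<alpha>=\<beta>)*q^2*(Q-1)"
      using Suc.IH t by (simp add: Q_def)
    have e1: "2 * Suc k + 3 = 2*k+5" by simp
    show "(q^2-1) * G \<alpha> \<beta> (2*Suc k+3) t = (q^2-1)*(q*q^(2*Suc k+2) - 1) + ee (\<alpha>=\<beta>)*q^2*(q^(2*Suc k+2)-1)"
      unfolding e1 Q r using alg_Go[OF h1 h2] by (simp add: algebra_simps)
  qed
qed

lemma G_even:
  fixes \<alpha> :: "'a::{finite,field}"
  assumes a: "\<alpha> \<noteq> 0" and b: "\<beta> \<noteq> 0"
  defines "q \<equiv> real CARD('a)"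
  shows "\<forall>t. t * t = 1 \<longrightarrow> (q^2-1) * G \<alpha> \<beta> (2*k+4) t =
     (q^2-1)*((q*q^(k+1)-1)^2 + (q-1)*(q*q^(k+1))*(ee ((-1)^k*t = \<alpha>) + ee ((-1)^k*t = \<beta>))
        + q*q*q^(k+1)*ee ((-1)^k*t = \<alpha>)*ee ((-1)^k*t = \<beta>))
     + ee (\<alpha>=\<beta>)*q^2*(q^(k+1)-1)*(q*q^(k+1)-1)"
proof (induction k)
  case 0
  show ?case
  proof (intro allI impI)
    fix t :: 'a assume tt: "t * t = 1"
    then have t: "t \<noteq> 0" by auto
    have s3: "S \<alpha> \<beta> 3 = (q - 1) * (q * (q - 1) + ((q - 1) ^ 3 + 2 * q * (q - 1) + ee (\<alpha>=\<beta>) * q ^ 2))"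
      using S3[OF a b] by (simp add: Kv_ee q_def)
    have g: "G \<alpha> \<beta> 4 t = S \<alpha> \<beta> 3 + q * ((q - 1 + q * ee (t = \<alpha>)) * (q - 1 + q * ee (t = \<beta>)))"
      using G_rec[of 4 \<alpha> \<beta> t] P0_4[OF t, of \<alpha> \<beta>] sig_inv[OF t, of \<alpha>] sig_inv[OF t, of \<beta>]
      by (simp add: q_def ee_def)
    show "(q^2-1) * G \<alpha> \<beta> (2*0+4) t =
     (q^2-1)*((q*q^(0+1)-1)^2 + (q-1)*(q*q^(0+1))*(ee ((-1)^0*t = \<alpha>) + ee ((-1)^0*t = \<beta>))
        + q*q*q^(0+1)*ee ((-1)^0*t = \<alpha>)*ee ((-1)^0*t = \<beta>))
     + ee (\<alpha>=\<beta>)*q^2*(q^(0+1)-1)*(q*q^(0+1)-1)"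
      by (simp add: g s3 power2_eq_square power3_eq_cube algebra_simps)
  qed
next
  case (Suc k)
  show ?case
  proof (intro allI impI)
    fix t :: 'a assume tt: "t * t = 1"
    then have t: "t \<noteq> 0" by auto
    have inv: "- 1 / t = - t" using tt t by (simp add: field_simps)
    have tt': "(- t) * (- t) = 1" using tt by simp
    define P where "P = q^(k+1)"
    have P: "q^(Suc k+1) = q*P" by (simp add: P_def)
    have m: "2*k+6-1 = 2*k+5" "2*k+6-2 = 2*k+4" "2*k+6 \<ge> 5" by simp_all
    have r: "G \<alpha> \<beta> (2*k+6) t = S \<alpha> \<beta> (2*k+5) + q * G \<alpha> \<beta> (2*k+4) (- t)"
      using G_big[OF m(3) t, of \<alpha> \<beta>] unfolding m(1,2) q_def inv .
    have h1: "(q+1)*S \<alpha> \<beta> (2*k+5) = (q+1)*(q-1)*(q*q*q*(P*P) - 1) + ee (\<alpha>=\<beta>)*q^2*(q*q*(P*P) - 1)"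
    proof -
      have ex: "2*Suc k+2 = 2 + (k+1) + (k+1)" by simp
      have "q^(2*Suc k+2) = q^2 * q^(k+1) * q^(k+1)" unfolding ex by (simp only: power_add)
      then have Q2: "q^(2*Suc k+2) = q*q*(P*P)" by (simp only: P_def power2_eq_square mult.assoc)
      have e5: "2*Suc k+3 = 2*k+5" by simp
      show ?thesis using conjunct1[OF S_closed[OF a b, of "Suc k"]] unfolding Q2 e5 q_def[symmetric]
        by (simp only: mult.assoc)
    qed
    have sg: "(-1)^k * (- t) = (-1)^(Suc k) * t" by simp
    have h2: "(q^2-1)*G \<alpha> \<beta> (2*k+4) (- t) =
     (q^2-1)*((q*P-1)^2 + (q-1)*(q*P)*(ee ((-1)^(Suc k)*t = \<alpha>) + ee ((-1)^(Suc k)*t = \<beta>))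
        + q*q*P*ee ((-1)^(Suc k)*t = \<alpha>)*ee ((-1)^(Suc k)*t = \<beta>))
     + ee (\<alpha>=\<beta>)*q^2*(P-1)*(q*P-1)"
      using Suc.IH[rule_format, OF tt'] unfolding sg P_def .
    have e1: "2 * Suc k + 4 = 2*k+6" by simp
    show "(q^2-1) * G \<alpha> \<beta> (2*Suc k+4) t =
     (q^2-1)*((q*q^(Suc k+1)-1)^2 + (q-1)*(q*q^(Suc k+1))*(ee ((-1)^Suc k*t = \<alpha>) + ee ((-1)^Suc k*t = \<beta>))
        + q*q*q^(Suc k+1)*ee ((-1)^Suc k*t = \<alpha>)*ee ((-1)^Suc k*t = \<beta>))
     + ee (\<alpha>=\<beta>)*q^2*(q^(Suc k+1)-1)*(q*q^(Suc k+1)-1)"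
      unfolding e1 P r using alg_Ge[OF h1 h2] by (simp add: algebra_simps)
  qed
qed



lemma divide_out:
  fixes c X Y Z :: real
  assumes "c \<noteq> 0" "c * X = c * Y + Z"
  shows "X = Y + Z / c"
proof -
  have "X = (c * X) / c" using assms(1) by simp
  also have "\<dots> = Y + Z / c" using assms by (simp add: add_divide_distrib)
  finally show ?thesis .
qed

lemma q_facts: "real CARD('a::{finite,field}) ^ 2 - 1 \<noteq> 0"
proof -
  have "real CARD('a) \<ge> 2" using card_ge2[where 'a='a] by simp
  then have "real CARD('a) ^ 2 \<ge> 2 ^ 2" by (intro power_mono) auto
  then show ?thesis by simp
qed

lemma odd_main:
  fixes \<alpha> :: "'a::{finite,field}"
  assumes n: "n \<ge> 3" "odd n" and a: "\<alpha> \<noteq> 0"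
  defines "q \<equiv> real CARD('a)"
  shows "(q^2-1) * real (N_D_odd n \<alpha>) = (q^2-1)*(q^n - 1) + ee (\<alpha>=1)*q^2*(q^(n-1)-1)"
proof -
  define k where "k = (n - 3) div 2"
  have k: "n = 2*k+3" using n unfolding k_def by presburger
  have f: "(\<lambda>i. if i = 1 then \<alpha> else 1) = AA \<alpha> 1 n 1" by (auto simp: AA_def)
  have N: "real (N_D_odd n \<alpha>) = G \<alpha> 1 n 1" unfolding N_D_odd_def f G_def by (rule card_D)
  have s: "n = Suc (2*k+2)" "n - 1 = 2*k+2" using k by simp_all
  have p1: "q * q^(2*k+2) = q^n" "q^(2*k+2) = q^(n-1)" unfolding s by (simp only: power_Suc) simp
  have H: "(q^2-1)*G \<alpha> 1 n 1 = (q^2-1)*(q*q^(2*k+2)-1) + ee (\<alpha>=1)*q^2*(q^(2*k+2)-1)"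
    using G_odd[OF a one_neq_zero, of k, rule_format, OF one_neq_zero] unfolding q_def k[symmetric] .
  show ?thesis unfolding N H unfolding p1(1) unfolding p1(2) ..
qed

lemma even_main:
  fixes \<alpha> :: "'a::{finite,field}"
  assumes n: "n \<ge> 3" "even n" and a: "\<alpha> \<noteq> 0" and b: "\<beta> \<noteq> 0"
  defines "q \<equiv> real CARD('a)"
  shows "(q^2-1) * real (N_D_even n \<alpha> \<beta>) =
     (q^2-1)*((q^(n div 2)-1)^2 + (q-1)*q^(n div 2)*(ee (\<alpha> = (-1)^(n div 2)) + ee (\<beta> = (-1)^(n div 2)))
        + q^((n+2) div 2)*ee (\<alpha> = (-1)^(n div 2))*ee (\<beta> = (-1)^(n div 2)))
     + ee (\<alpha>=\<beta>)*q^2*(q^((n-2) div 2)-1)*(q^(n div 2)-1)"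
proof -
  define k where "k = (n - 4) div 2"
  have k: "n = 2*k+4" using n unfolding k_def by presburger
  define P where "P = q^(k+1)"
  have f: "(\<lambda>i. if i = 1 then \<alpha> else if i = 2 then \<beta> else 1) = AA \<alpha> \<beta> n 1" by (auto simp: AA_def)
  have N: "real (N_D_even n \<alpha> \<beta>) = G \<alpha> \<beta> n 1" unfolding N_D_even_def f G_def by (rule card_D)
  have d: "n div 2 = Suc (k+1)" "(n+2) div 2 = Suc (Suc (k+1))" "(n-2) div 2 = k+1" using k by simp_all
  have p: "q^(n div 2) = q*P" "q^((n+2) div 2) = q*q*P" "q^((n-2) div 2) = P"
    unfolding d P_def by (simp_all only: power_Suc)
  have sg: "(-1::'a)^(n div 2) = (-1)^k * 1" unfolding d by simp
  have H: "(q^2-1)*G \<alpha> \<beta> n 1 =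
     (q^2-1)*((q*P-1)^2 + (q-1)*(q*P)*(ee ((-1)^k*1 = \<alpha>) + ee ((-1)^k*1 = \<beta>))
        + q*q*P*ee ((-1)^k*1 = \<alpha>)*ee ((-1)^k*1 = \<beta>))
     + ee (\<alpha>=\<beta>)*q^2*(P-1)*(q*P-1)"
    using G_even[OF a b, of k, rule_format, of 1] unfolding q_def[symmetric] P_def[symmetric] k[symmetric] by simp
  have sym: "((-1::'a)^k*1 = \<alpha>) = (\<alpha> = (-1)^k*1)" "((-1::'a)^k*1 = \<beta>) = (\<beta> = (-1)^k*1)" by auto
  show ?thesis unfolding N H unfolding p sg sym ..
qed

theorem mainTheorem16:
  fixes n :: nat and q :: real
  assumes "n \<ge> 3"
  defines "q \<equiv> real (card (UNIV :: 'a::{finite,field} set))"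
  shows
   "(odd n \<longrightarrow> (\<forall>\<alpha>::'a. \<alpha> \<noteq> 0 \<and> \<alpha> \<noteq> 1 \<longrightarrow> real (N_D_odd n \<alpha>) = q ^ n - 1)) \<and>
    (odd n \<longrightarrow> real (N_D_odd n (1::'a)) = q ^ n - 1 + q ^ 2 * (q ^ (n - 1) - 1) / (q ^ 2 - 1)) \<and>
    (even n \<longrightarrow> (\<forall>\<alpha> \<beta>::'a. \<alpha> \<noteq> 0 \<and> \<beta> \<noteq> 0 \<and> \<alpha> \<noteq> \<beta> \<and> \<alpha> \<noteq> (-1) ^ (n div 2) \<and> \<beta> \<noteq> (-1) ^ (n div 2) \<longrightarrow>
        real (N_D_even n \<alpha> \<beta>) = (q ^ (n div 2) - 1) ^ 2)) \<and>
    (even n \<longrightarrow> (\<forall>\<alpha>::'a. \<alpha> \<noteq> 0 \<and> \<alpha> \<noteq> (-1) ^ (n div 2) \<longrightarrow>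
        real (N_D_even n \<alpha> \<alpha>) = (q ^ (n div 2) - 1) ^ 2
          + q ^ 2 * ((q ^ ((n - 2) div 2) - 1) * (q ^ (n div 2) - 1)) / (q ^ 2 - 1))) \<and>
    (even n \<longrightarrow> (\<forall>\<beta>::'a. \<beta> \<noteq> 0 \<and> \<beta> \<noteq> (-1) ^ (n div 2) \<longrightarrow>
        real (N_D_even n ((-1) ^ (n div 2)) \<beta>) = (q ^ (n div 2) - 1) ^ 2 + (q - 1) * q ^ (n div 2))) \<and>
    (even n \<longrightarrow>
        real (N_D_even n ((-1) ^ (n div 2) :: 'a) ((-1) ^ (n div 2))) = (q ^ (n div 2) - 1) ^ 2
          + 2 * (q - 1) * q ^ (n div 2)
          + q ^ 2 * ((q ^ ((n - 2) div 2) - 1) * (q ^ (n div 2) - 1)) / (q ^ 2 - 1)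
          + q ^ ((n + 2) div 2))"
proof -
  have c: "q^2 - 1 \<noteq> 0" unfolding q_def using q_facts[where 'a='a] .
  have s0: "(-1::'a) ^ m \<noteq> 0" for m by simp
  have P1: "odd n \<longrightarrow> (\<forall>\<alpha>::'a. \<alpha> \<noteq> 0 \<and> \<alpha> \<noteq> 1 \<longrightarrow> real (N_D_odd n \<alpha>) = q ^ n - 1)"
  proof (intro impI allI)
    fix \<alpha> :: 'a assume o: "odd n" and a: "\<alpha> \<noteq> 0 \<and> \<alpha> \<noteq> 1"
    have "(q^2-1) * real (N_D_odd n \<alpha>) = (q^2-1)*(q^n - 1) + 0"
      using odd_main[OF assms(1) o, of \<alpha>] a unfolding q_def by (simp add: ee_def)
    from divide_out[OF c this] show "real (N_D_odd n \<alpha>) = q ^ n - 1" by simp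
  qed
  have P2: "odd n \<longrightarrow> real (N_D_odd n (1::'a)) = q ^ n - 1 + q ^ 2 * (q ^ (n - 1) - 1) / (q ^ 2 - 1)"
  proof
    assume o: "odd n"
    have "(q^2-1) * real (N_D_odd n (1::'a)) = (q^2-1)*(q^n - 1) + q ^ 2 * (q ^ (n - 1) - 1)"
      using odd_main[OF assms(1) o, of "1::'a"] unfolding q_def by (simp add: ee_def)
    from divide_out[OF c this] show "real (N_D_odd n (1::'a)) = q ^ n - 1 + q ^ 2 * (q ^ (n - 1) - 1) / (q ^ 2 - 1)" .
  qed
  have P3: "even n \<longrightarrow> (\<forall>\<alpha> \<beta>::'a. \<alpha> \<noteq> 0 \<and> \<beta> \<noteq> 0 \<and> \<alpha> \<noteq> \<beta> \<and> \<alpha> \<noteq> (-1) ^ (n div 2) \<and> \<beta> \<noteq> (-1) ^ (n div 2) \<longrightarrow>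
        real (N_D_even n \<alpha> \<beta>) = (q ^ (n div 2) - 1) ^ 2)"
  proof (intro impI allI)
    fix \<alpha> \<beta> :: 'a assume e: "even n" and a: "\<alpha> \<noteq> 0 \<and> \<beta> \<noteq> 0 \<and> \<alpha> \<noteq> \<beta> \<and> \<alpha> \<noteq> (-1) ^ (n div 2) \<and> \<beta> \<noteq> (-1) ^ (n div 2)"
    have "(q^2-1) * real (N_D_even n \<alpha> \<beta>) = (q^2-1)*((q ^ (n div 2) - 1) ^ 2) + 0"
      using even_main[OF assms(1) e, of \<alpha> \<beta>] a unfolding q_def by (simp add: ee_def)
    from divide_out[OF c this] show "real (N_D_even n \<alpha> \<beta>) = (q ^ (n div 2) - 1) ^ 2" by simp
  qed
  have P4: "even n \<longrightarrow> (\<forall>\<alpha>::'a. \<alpha> \<noteq> 0 \<and> \<alpha> \<noteq> (-1) ^ (n div 2) \<longrightarrow>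
        real (N_D_even n \<alpha> \<alpha>) = (q ^ (n div 2) - 1) ^ 2
          + q ^ 2 * ((q ^ ((n - 2) div 2) - 1) * (q ^ (n div 2) - 1)) / (q ^ 2 - 1))"
  proof (intro impI allI)
    fix \<alpha> :: 'a assume e: "even n" and a: "\<alpha> \<noteq> 0 \<and> \<alpha> \<noteq> (-1) ^ (n div 2)"
    have "(q^2-1) * real (N_D_even n \<alpha> \<alpha>) = (q^2-1)*((q ^ (n div 2) - 1) ^ 2)
         + q ^ 2 * ((q ^ ((n - 2) div 2) - 1) * (q ^ (n div 2) - 1))"
      using even_main[OF assms(1) e, of \<alpha> \<alpha>] a unfolding q_def by (simp add: ee_def mult.assoc)
    from divide_out[OF c this] show "real (N_D_even n \<alpha> \<alpha>) = (q ^ (n div 2) - 1) ^ 2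
          + q ^ 2 * ((q ^ ((n - 2) div 2) - 1) * (q ^ (n div 2) - 1)) / (q ^ 2 - 1)" .
  qed
  have P5: "even n \<longrightarrow> (\<forall>\<beta>::'a. \<beta> \<noteq> 0 \<and> \<beta> \<noteq> (-1) ^ (n div 2) \<longrightarrow>
        real (N_D_even n ((-1) ^ (n div 2)) \<beta>) = (q ^ (n div 2) - 1) ^ 2 + (q - 1) * q ^ (n div 2))"
  proof (intro impI allI)
    fix \<beta> :: 'a assume e: "even n" and b: "\<beta> \<noteq> 0 \<and> \<beta> \<noteq> (-1) ^ (n div 2)"
    have "(q^2-1) * real (N_D_even n ((-1) ^ (n div 2)) \<beta>) = (q^2-1)*((q ^ (n div 2) - 1) ^ 2 + (q - 1) * q ^ (n div 2)) + 0"
      using even_main[OF assms(1) e s0[of "n div 2"], where \<beta>=\<beta>] b unfolding q_def by (auto simp: ee_def)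
    from divide_out[OF c this] show "real (N_D_even n ((-1) ^ (n div 2)) \<beta>) = (q ^ (n div 2) - 1) ^ 2 + (q - 1) * q ^ (n div 2)" by simp
  qed
  have P6: "even n \<longrightarrow>
        real (N_D_even n ((-1) ^ (n div 2) :: 'a) ((-1) ^ (n div 2))) = (q ^ (n div 2) - 1) ^ 2
          + 2 * (q - 1) * q ^ (n div 2)
          + q ^ 2 * ((q ^ ((n - 2) div 2) - 1) * (q ^ (n div 2) - 1)) / (q ^ 2 - 1)
          + q ^ ((n + 2) div 2)"
  proof
    assume e: "even n"
    have "(q^2-1) * real (N_D_even n ((-1) ^ (n div 2) :: 'a) ((-1) ^ (n div 2))) =
       (q^2-1)*((q ^ (n div 2) - 1) ^ 2 + 2 * (q - 1) * q ^ (n div 2) + q ^ ((n + 2) div 2))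
       + q ^ 2 * ((q ^ ((n - 2) div 2) - 1) * (q ^ (n div 2) - 1))"
      using even_main[OF assms(1) e s0 s0] unfolding q_def by (simp add: ee_def mult.assoc)
    from divide_out[OF c this] show "real (N_D_even n ((-1) ^ (n div 2) :: 'a) ((-1) ^ (n div 2))) = (q ^ (n div 2) - 1) ^ 2
          + 2 * (q - 1) * q ^ (n div 2)
          + q ^ 2 * ((q ^ ((n - 2) div 2) - 1) * (q ^ (n div 2) - 1)) / (q ^ 2 - 1)
          + q ^ ((n + 2) div 2)" by simp
  qed
  show ?thesis using P1 P2 P3 P4 P5 P6 by blast
qed


end
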